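(* Let $r_0>0$, $\kappa\in\mathbb R$, $F,h\in C^\infty([0,\infty);\mathbb R)$ with $F(r_0^2)=F'(r_0^2)=0$. Suppose that either (1) there is $r\ge0$ with $F(r^2)<0$, or (2) there is $r\ge0$ with $1+2\kappa r^2h'(r^2)^2<0$. Then for every $\mathfrak p\in\mathbb R$ there exists a sequence $(v_n)\subset\mathcal X(\mathbb R)$ with $\inf_{\mathbb R}|v_n|>0$, $P(v_n)=\mathfrak p$ for all $n$, and $E_\kappa(v_n)\to-\infty$.
   Context: $\mathcal X(\mathbb R)=\{v\in H^1_{loc}(\mathbb R;\mathbb C):v'\in L^2(\mathbb R),\ |v|^2-r_0^2\in L^2(\mathbb R)\}$. $E_\kappa(v)=\int_{\mathbb R}\big(|v'|^2+F(|v|^2)+\frac\kappa2|(h(|v|^2))'|^2\big)dx$. For $v\in\mathcal X(\mathbb R)$ with $\inf|v|>0$, $P(v)=\int_{\mathbb R}\mathrm{Re}(iv'\bar v)\big(1-\frac{r_0^2}{|v|^2}\big)dx$. *)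

theory Defs
  imports "HOL-Analysis.Analysis"
begin

definition smooth_nonneg :: "(real \<Rightarrow> real) \<Rightarrow> bool" where
  "smooth_nonneg f \<longleftrightarrow> (\<exists>D. D 0 = f \<and>
     (\<forall>k x. 0 \<le> x \<longrightarrow> (D k has_real_derivative D (Suc k) x) (at x within {0..})))"

text \<open>w is the (weak) derivative of the locally absolutely continuous function v:
  v is the continuous H^1_loc representative, w locally integrable, v b - v a = integral of w.\<close>
definition H1loc_deriv :: "(real \<Rightarrow> 'a::{banach,second_countable_topology}) \<Rightarrow> (real \<Rightarrow> 'a) \<Rightarrow> bool" where
  "H1loc_deriv v w \<longleftrightarrow> w \<in> borel_measurable lborel \<and>
     (\<forall>a b. a \<le> b \<longrightarrow> set_integrable lborel {a..b} w \<and>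
        v b - v a = (LINT x:{a..b}|lborel. w x))"

definition in_X :: "real \<Rightarrow> (real \<Rightarrow> complex) \<Rightarrow> (real \<Rightarrow> complex) \<Rightarrow> bool" where
  "in_X r0 v w \<longleftrightarrow> H1loc_deriv v w \<and>
     integrable lborel (\<lambda>x. (cmod (w x))\<^sup>2) \<and>
     (\<lambda>x. (cmod (v x))\<^sup>2 - r0\<^sup>2) \<in> borel_measurable lborel \<and>
     integrable lborel (\<lambda>x. ((cmod (v x))\<^sup>2 - r0\<^sup>2)\<^sup>2)"

text \<open>Energy integrand; w = v', g = (h(|v|^2))'.\<close>
definition E_dens :: "real \<Rightarrow> (real \<Rightarrow> real) \<Rightarrow> (real \<Rightarrow> complex) \<Rightarrow> (real \<Rightarrow> complex)
    \<Rightarrow> (real \<Rightarrow> real) \<Rightarrow> real \<Rightarrow> real" where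
  "E_dens \<kappa> F v w g x = (cmod (w x))\<^sup>2 + F ((cmod (v x))\<^sup>2) + \<kappa> / 2 * (g x)\<^sup>2"

definition E_kappa :: "real \<Rightarrow> (real \<Rightarrow> real) \<Rightarrow> (real \<Rightarrow> complex) \<Rightarrow> (real \<Rightarrow> complex)
    \<Rightarrow> (real \<Rightarrow> real) \<Rightarrow> real" where
  "E_kappa \<kappa> F v w g = (LINT x|lborel. E_dens \<kappa> F v w g x)"

definition P_dens :: "real \<Rightarrow> (real \<Rightarrow> complex) \<Rightarrow> (real \<Rightarrow> complex) \<Rightarrow> real \<Rightarrow> real" where
  "P_dens r0 v w x = Re (\<i> * w x * cnj (v x)) * (1 - r0\<^sup>2 / (cmod (v x))\<^sup>2)"

definition P_mom :: "real \<Rightarrow> (real \<Rightarrow> complex) \<Rightarrow> (real \<Rightarrow> complex) \<Rightarrow> real" where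
  "P_mom r0 v w = (LINT x|lborel. P_dens r0 v w x)"

end

theory Submission imports Defs begin

definition clamp :: "real \<Rightarrow> real \<Rightarrow> real \<Rightarrow> real" where
  "clamp a b x = max a (min b x)"

lemma continuous_clamp[continuous_intros]:
  "continuous_on S f \<Longrightarrow> continuous_on S (\<lambda>x. clamp a b (f x))"
  unfolding clamp_def by (intro continuous_intros)

lemma clamp_deriv:
  assumes "a < b" "x \<noteq> a" "x \<noteq> b"
  shows "(clamp a b has_real_derivative indicator {a<..<b} x) (at x)"
proof -
  consider "x < a" | "a < x \<and> x < b" | "b < x" using assms by linarith
  then show ?thesis
  proof cases
    case 1
    show ?thesis
      apply (rule has_field_derivative_transform_within_open[where f="\<lambda>_. a" and S="{..<a}"])
      using 1 assms by (auto simp: clamp_def indicator_def intro!: derivative_eq_intros)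
  next
    case 2
    show ?thesis
      apply (rule has_field_derivative_transform_within_open[where f="\<lambda>x. x" and S="{a<..<b}"])
      using 2 assms by (auto simp: clamp_def indicator_def intro!: derivative_eq_intros)
  next
    case 3
    show ?thesis
      apply (rule has_field_derivative_transform_within_open[where f="\<lambda>_. b" and S="{b<..}"])
      using 3 assms by (auto simp: clamp_def indicator_def intro!: derivative_eq_intros)
  qed
qed

lemma clamp_deriv_chain:
  assumes "a < b" "f x \<noteq> a" "f x \<noteq> b" "(f has_real_derivative f') (at x)"
  shows "((\<lambda>x. clamp a b (f x)) has_real_derivative indicator {a<..<b} (f x) * f') (at x)"
  using DERIV_chain2[OF clamp_deriv[OF assms(1-3)] assms(4)] by simp

lemma H1loc_derivI:
  fixes f :: "real \<Rightarrow> 'a::euclidean_space"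
  assumes S: "finite S" and cont: "continuous_on UNIV f"
    and der: "\<And>x. x \<notin> S \<Longrightarrow> (f has_vector_derivative f' x) (at x)"
    and meas: "f' \<in> borel_measurable borel"
    and bnd: "\<And>x. norm (f' x) \<le> B"
  shows "H1loc_deriv f f'"
  unfolding H1loc_deriv_def
proof (intro conjI allI impI)
  show "f' \<in> borel_measurable lborel" using meas by simp
  fix a b :: real assume ab: "a \<le> b"
  show si: "set_integrable lborel {a..b} f'"
    unfolding set_integrable_def
  proof (rule Bochner_Integration.integrable_bound)
    show "integrable lborel (\<lambda>x. B * indicator {a..b} x)"
      by (intro integrable_mult_right integrable_real_indicator) (auto simp: emeasure_lborel_Icc_eq)
    show "(\<lambda>x. indicator {a..b} x *\<^sub>R f' x) \<in> borel_measurable lborel"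
      using meas by measurable
    show "AE x in lborel. norm (indicator {a..b} x *\<^sub>R f' x) \<le> norm (B * indicator {a..b} x)"
      using bnd by (auto simp: indicator_def intro: order_trans[OF _ abs_ge_self])
  qed
  have "(f' has_integral f b - f a) {a..b}"
    by (rule fundamental_theorem_of_calculus_interior_strong[OF S ab])
       (use der cont in \<open>auto intro: continuous_on_subset\<close>)
  then show "f b - f a = set_lebesgue_integral lborel {a..b} f'"
    using set_borel_integral_eq_integral[OF si] by (simp add: integral_unique)
qed

lemma integrable_cpt:
  fixes f :: "real \<Rightarrow> real"
  assumes meas: "f \<in> borel_measurable borel"
    and bnd: "\<And>x. \<bar>f x\<bar> \<le> B" and supp: "\<And>x. x \<notin> {a..b} \<Longrightarrow> f x = 0"
  shows "integrable lborel f"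
proof (rule Bochner_Integration.integrable_bound)
  show "integrable lborel (\<lambda>x. B * indicator {a..b} x)"
    by (intro integrable_mult_right integrable_real_indicator) (auto simp: emeasure_lborel_Icc_eq)
  show "f \<in> borel_measurable lborel" using meas by simp
  show "AE x in lborel. norm (f x) \<le> norm (B * indicator {a..b} x)"
    using bnd supp by (auto simp: indicator_def intro: order_trans[OF _ abs_ge_self])
qed

lemma lint_ftc:
  fixes q Q :: "real \<Rightarrow> real"
  assumes ab: "a \<le> b" and qc: "continuous_on UNIV q"
    and der: "\<And>x. (Q has_real_derivative q x) (at x)"
  shows "integrable lborel (\<lambda>x. indicator {a<..<b} x * q x)"
    and "(LINT x|lborel. indicator {a<..<b} x * q x) = Q b - Q a"
proof -
  obtain B where B: "\<And>x. x \<in> {a..b} \<Longrightarrow> norm (q x) \<le> B"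
    using continuous_on_compact_bound[OF compact_Icc continuous_on_subset[OF qc]] by blast
  show "integrable lborel (\<lambda>x. indicator {a<..<b} x * q x)"
  proof (rule integrable_cpt[where B=B and a=a and b=b])
    show "(\<lambda>x. indicator {a<..<b} x * q x) \<in> borel_measurable borel"
      using borel_measurable_continuous_onI[OF qc] by measurable
    show "\<bar>indicator {a<..<b} x * q x\<bar> \<le> B" for x
      using B[of x] B[of a] ab by (auto simp: indicator_def)
    show "x \<notin> {a..b} \<Longrightarrow> indicator {a<..<b} x * q x = 0" for x
      by (auto simp: indicator_def)
  qed
  have "(LBINT x=a..b. q x) = Q b - Q a"
    by (rule interval_integral_FTC_finite)
       (use qc der in \<open>auto intro: continuous_on_subset has_field_derivative_at_within
          simp: has_real_derivative_iff_has_vector_derivative[symmetric]\<close>)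
  then show "(LINT x|lborel. indicator {a<..<b} x * q x) = Q b - Q a"
    using ab by (simp add: interval_lebesgue_integral_def einterval_eq_Icc set_lebesgue_integral_def)
qed

lemma filterlim_at_bot_le:
  fixes f u :: "nat \<Rightarrow> real"
  assumes "filterlim u at_bot sequentially" "\<And>n. f n \<le> u n"
  shows "filterlim f at_bot sequentially"
  unfolding filterlim_at_bot
proof
  fix Z :: real
  have "eventually (\<lambda>n. u n \<le> Z) sequentially" using assms(1) unfolding filterlim_at_bot by blast
  then show "eventually (\<lambda>n. f n \<le> Z) sequentially"
    by eventually_elim (use assms(2) order_trans in blast)
qed

locale cons =
  fixes r0 r1 eps T m c :: real
  assumes r0_pos: "r0 > 0" and r1_pos: "r1 > 0" and eps_nn: "0 \<le> eps"
    and eps_r0: "eps < r0" and eps_r1: "eps < r1" and T_pos: "T > 0" and m_pos: "m > 0"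
    and sinmT: "sin (m * T) = 0" and cosmT: "cos (m * T) = 1"
begin

definition "phi x = clamp 0 1 (x + 1) - clamp 0 1 (x - T)"
definition "rho x = r0 + (r1 - r0) * phi x + eps * sin (m * clamp 0 T x)"
definition "rhod x = (r1 - r0) * (indicator {-1<..<0} x - indicator {T<..<T+1} x)
    + eps * m * cos (m * clamp 0 T x) * indicator {0<..<T} x"
definition "theta x = c * clamp 0 T x"
definition "thetad x = c * indicator {0<..<T} x"

lemma phi_range: "0 \<le> phi x" "phi x \<le> 1"
  using T_pos unfolding phi_def clamp_def by auto

lemma conv_between:
  fixes t :: real assumes "0 \<le> t" "t \<le> 1"
  shows "min r0 r1 \<le> r0 + (r1 - r0) * t" "r0 + (r1 - r0) * t \<le> max r0 r1"
proof -
  have e: "r0 + (r1 - r0) * t = (1 - t) * r0 + t * r1" by algebra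
  show "min r0 r1 \<le> r0 + (r1 - r0) * t" unfolding e
    using assms mult_left_mono[of "min r0 r1" r0 "1-t"] mult_left_mono[of "min r0 r1" r1 t]
    by (auto simp: algebra_simps)
  show "r0 + (r1 - r0) * t \<le> max r0 r1" unfolding e
    using assms mult_left_mono[of r0 "max r0 r1" "1-t"] mult_left_mono[of r1 "max r0 r1" t]
    by (auto simp: algebra_simps)
qed

lemma rho_outer: "x \<notin> {0<..<T} \<Longrightarrow> rho x = r0 + (r1 - r0) * phi x"
  using T_pos sinmT unfolding rho_def clamp_def by (auto simp: max_def min_def)

lemma rho_inner: "x \<in> {0..T} \<Longrightarrow> rho x = r1 + eps * sin (m * x)"
  using T_pos unfolding rho_def phi_def clamp_def by (auto simp: max_def min_def)

lemma rho_far: "x \<notin> {-1..T+1} \<Longrightarrow> rho x = r0"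
  using T_pos sinmT unfolding rho_def phi_def clamp_def by (auto simp: max_def min_def)

lemma rhod_far: "x \<notin> {-1..T+1} \<Longrightarrow> rhod x = 0"
  using T_pos unfolding rhod_def by (auto simp: indicator_def)

lemma thetad_far: "x \<notin> {0<..<T} \<Longrightarrow> thetad x = 0"
  unfolding thetad_def by auto

lemma rhod_inner: "x \<in> {0<..<T} \<Longrightarrow> rhod x = eps * m * cos (m * x)"
  using T_pos unfolding rhod_def clamp_def by (auto simp: indicator_def max_def min_def)

lemma thetad_inner: "x \<in> {0<..<T} \<Longrightarrow> thetad x = c"
  unfolding thetad_def by auto

lemma rho_between: "x \<notin> {0<..<T} \<Longrightarrow> min r0 r1 \<le> rho x \<and> rho x \<le> max r0 r1"
  using rho_outer conv_between phi_range by simp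

lemma rhod_outer_sq: "x \<notin> {0<..<T} \<Longrightarrow> (rhod x)\<^sup>2 \<le> (r1 - r0)\<^sup>2"
  using T_pos unfolding rhod_def by (auto simp: indicator_def power2_commute)

lemma rho_lo: "rho x \<ge> min r0 r1 - eps"
proof (cases "x \<in> {0<..<T}")
  case True
  then have "rho x = r1 + eps * sin (m * x)" using rho_inner by auto
  moreover have "eps * sin (m * x) \<ge> - eps"
    using eps_nn mult_left_mono[OF sin_ge_minus_one eps_nn, of "m*x"] by simp
  ultimately show ?thesis by linarith
next
  case False then show ?thesis using rho_between eps_nn by force
qed

lemma rho_hi: "rho x \<le> max r0 r1 + eps"
proof (cases "x \<in> {0<..<T}")
  case True
  then have "rho x = r1 + eps * sin (m * x)" using rho_inner by auto
  moreover have "eps * sin (m * x) \<le> eps"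
    using mult_left_mono[OF sin_le_one eps_nn, of "m*x"] by simp
  ultimately show ?thesis by linarith
next
  case False then show ?thesis using rho_between eps_nn by force
qed

lemma rho_pos: "rho x \<ge> min r0 r1 - eps" "min r0 r1 - eps > 0"
  using rho_lo eps_r0 eps_r1 by auto

lemma rhod_bound: "\<bar>rhod x\<bar> \<le> 2 * \<bar>r1 - r0\<bar> + eps * m"
proof -
  have "\<bar>eps * m * cos (m * clamp 0 T x) * indicator {0<..<T} x\<bar> \<le> eps * m"
    using eps_nn m_pos abs_cos_le_one[of "m * clamp 0 T x"]
    by (auto simp: indicator_def abs_mult intro: mult_left_le)
  moreover have "\<bar>(r1 - r0) * (indicator {-1<..<0} x - indicator {T<..<T+1} x)\<bar> \<le> 2 * \<bar>r1 - r0\<bar>"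
    by (auto simp: indicator_def abs_mult)
  ultimately show ?thesis unfolding rhod_def by linarith
qed

lemma thetad_bound: "\<bar>thetad x\<bar> \<le> \<bar>c\<bar>"
  unfolding thetad_def by (auto simp: indicator_def)

lemma rho_cont: "continuous_on UNIV rho"
  unfolding rho_def phi_def by (intro continuous_intros)

lemma theta_cont: "continuous_on UNIV theta"
  unfolding theta_def by (intro continuous_intros)

definition "Sx = {-1, 0, T, T+1}"

lemma Sx_finite: "finite Sx" unfolding Sx_def by simp

lemma clamp_d1: "x \<notin> Sx \<Longrightarrow> ((\<lambda>z. clamp 0 1 (z + 1)) has_real_derivative indicator {-1<..<0} x) (at x)"
proof -
  assume x: "x \<notin> Sx"
  have d: "((\<lambda>z. z + 1) has_real_derivative 1) (at x)" by (auto intro!: derivative_eq_intros)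
  have "((\<lambda>z. clamp 0 1 (z + 1)) has_real_derivative indicator {0<..<1} (x + 1) * 1) (at x)"
    by (rule clamp_deriv_chain[OF _ _ _ d]) (use x in \<open>auto simp: Sx_def\<close>)
  moreover have "indicator {0<..<1} (x + 1) = (indicator {-1<..<0} x :: real)"
    by (auto simp: indicator_def)
  ultimately show ?thesis by simp
qed

lemma clamp_d2: "x \<notin> Sx \<Longrightarrow> ((\<lambda>z. clamp 0 1 (z - T)) has_real_derivative indicator {T<..<T+1} x) (at x)"
proof -
  assume x: "x \<notin> Sx"
  have d: "((\<lambda>z. z - T) has_real_derivative 1) (at x)" by (auto intro!: derivative_eq_intros)
  have "((\<lambda>z. clamp 0 1 (z - T)) has_real_derivative indicator {0<..<1} (x - T) * 1) (at x)"
    by (rule clamp_deriv_chain[OF _ _ _ d]) (use x in \<open>auto simp: Sx_def\<close>)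
  moreover have "indicator {0<..<1} (x - T) = (indicator {T<..<T+1} x :: real)"
    by (auto simp: indicator_def)
  ultimately show ?thesis by simp
qed

lemma clamp_d3: "x \<notin> Sx \<Longrightarrow> (clamp 0 T has_real_derivative indicator {0<..<T} x) (at x)"
  using clamp_deriv[of 0 T x] T_pos unfolding Sx_def by auto

lemma rho_deriv: "x \<notin> Sx \<Longrightarrow> (rho has_real_derivative rhod x) (at x)"
  unfolding rho_def phi_def
  by (auto intro!: derivative_eq_intros clamp_d1 clamp_d2 clamp_d3 simp: rhod_def algebra_simps)

lemma theta_deriv: "x \<notin> Sx \<Longrightarrow> (theta has_real_derivative thetad x) (at x)"
  unfolding theta_def
  by (auto intro!: derivative_eq_intros clamp_d3 simp: thetad_def algebra_simps)

lemma rhod_meas: "rhod \<in> borel_measurable borel"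
  unfolding rhod_def clamp_def by measurable

lemma thetad_meas: "thetad \<in> borel_measurable borel"
  unfolding thetad_def by measurable

lemma rho_meas[measurable]: "rho \<in> borel_measurable borel"
  by (rule borel_measurable_continuous_onI[OF rho_cont])

lemma theta_meas[measurable]: "theta \<in> borel_measurable borel"
  by (rule borel_measurable_continuous_onI[OF theta_cont])

declare rhod_meas[measurable] thetad_meas[measurable]

definition "ee x = exp (\<i> * complex_of_real (theta x))"
definition "v x = complex_of_real (rho x) * ee x"
definition "w x = (complex_of_real (rhod x) + \<i> * complex_of_real (rho x * thetad x)) * ee x"

lemma norm_ee: "cmod (ee x) = 1"
  unfolding ee_def by (simp add: norm_exp_i_times)

lemma ee_cnj: "ee x * cnj (ee x) = 1"
  by (metis complex_norm_square norm_ee of_real_1 one_power2)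

lemma rho_gt0: "rho x > 0" using rho_pos(1)[of x] rho_pos(2) by linarith

lemma cmod_v: "cmod (v x) = rho x"
  using rho_gt0[of x] unfolding v_def by (simp add: norm_mult norm_ee)

lemma cmod_w_sq: "(cmod (w x))\<^sup>2 = (rhod x)\<^sup>2 + (rho x * thetad x)\<^sup>2"
proof -
  have "complex_of_real (rhod x) + \<i> * complex_of_real (rho x * thetad x) = Complex (rhod x) (rho x * thetad x)"
    by (simp add: complex_eq_iff)
  then show ?thesis unfolding w_def by (simp add: norm_mult norm_ee complex_norm)
qed

lemma P_dens_eq: "P_dens r0 v w x = - thetad x * ((rho x)\<^sup>2 - r0\<^sup>2)"
proof -
  have "\<i> * w x * cnj (v x) = \<i> * (complex_of_real (rhod x) + \<i> * complex_of_real (rho x * thetad x)) * complex_of_real (rho x) * (ee x * cnj (ee x))"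
    by (simp add: v_def w_def algebra_simps)
  also have "\<dots> = \<i> * (complex_of_real (rhod x) + \<i> * complex_of_real (rho x * thetad x)) * complex_of_real (rho x)"
    by (simp add: ee_cnj)
  also have "\<dots> = complex_of_real (- (rho x)\<^sup>2 * thetad x) + \<i> * complex_of_real (rho x * rhod x)"
    by (simp add: complex_eq_iff power2_eq_square)
  finally have "Re (\<i> * w x * cnj (v x)) = - (rho x)\<^sup>2 * thetad x"
    by (simp only:) simp
  then show ?thesis unfolding P_dens_def cmod_v using rho_gt0[of x]
    by (simp only:) (simp add: field_simps)
qed

lemma ee_deriv: "x \<notin> Sx \<Longrightarrow> (ee has_vector_derivative (\<i> * complex_of_real (thetad x)) * ee x) (at x)"
proof -
  assume x: "x \<notin> Sx"
  have f: "((\<lambda>x. \<i> * complex_of_real (theta x)) has_vector_derivative \<i> * complex_of_real (thetad x)) (at x)"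
    by (intro has_vector_derivative_mult_right has_vector_derivative_of_real theta_deriv x)
  have "(exp \<circ> (\<lambda>x. \<i> * complex_of_real (theta x)) has_vector_derivative (\<i> * complex_of_real (thetad x)) * exp (\<i> * complex_of_real (theta x))) (at x)"
    by (rule field_vector_diff_chain_at[OF f DERIV_exp])
  then show ?thesis unfolding ee_def by (simp add: o_def)
qed

lemma v_deriv: "x \<notin> Sx \<Longrightarrow> (v has_vector_derivative w x) (at x)"
proof -
  assume x: "x \<notin> Sx"
  have "(v has_vector_derivative complex_of_real (rho x) * ((\<i> * complex_of_real (thetad x)) * ee x) + complex_of_real (rhod x) * ee x) (at x)"
    unfolding v_def
    by (intro has_vector_derivative_mult has_vector_derivative_of_real rho_deriv ee_deriv x)
  moreover have "complex_of_real (rho x) * ((\<i> * complex_of_real (thetad x)) * ee x) + complex_of_real (rhod x) * ee x = w x"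
    unfolding w_def by (simp add: algebra_simps)
  ultimately show ?thesis by simp
qed

lemma v_cont: "continuous_on UNIV v"
  unfolding v_def ee_def by (intro continuous_intros rho_cont theta_cont)

lemma w_meas: "w \<in> borel_measurable borel"
  unfolding w_def ee_def by measurable

lemma w_bound: "cmod (w x) \<le> (2 * \<bar>r1 - r0\<bar> + eps * m) + (max r0 r1 + eps) * \<bar>c\<bar>"
proof -
  have "cmod (w x) \<le> \<bar>rhod x\<bar> + \<bar>rho x * thetad x\<bar>"
    unfolding w_def norm_mult norm_ee
    by (simp add: norm_triangle_le norm_mult)
  also have "\<bar>rho x * thetad x\<bar> \<le> (max r0 r1 + eps) * \<bar>c\<bar>"
    unfolding abs_mult using rho_gt0[of x] rho_hi[of x] thetad_bound[of x]
    by (intro mult_mono) auto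
  finally show ?thesis using rhod_bound[of x] by linarith
qed

lemma v_H1: "H1loc_deriv v w"
  by (rule H1loc_derivI[OF Sx_finite v_cont v_deriv w_meas w_bound])

lemma sin2mT: "sin (2 * m * T) = 0"
  using sin_double[of "m*T"] sinmT by (simp add: mult.assoc)

definition "qP x = - c * ((r1 + eps * sin (m * x))\<^sup>2 - r0\<^sup>2)"
definition "QP x = - c * ((r1\<^sup>2 - r0\<^sup>2 + eps\<^sup>2 / 2) * x - 2 * r1 * eps * cos (m * x) / m
    - eps\<^sup>2 * sin (2 * m * x) / (4 * m))"

lemma QP_deriv: "(QP has_real_derivative qP x) (at x)"
proof -
  have "(QP has_real_derivative - c * ((r1\<^sup>2 - r0\<^sup>2 + eps\<^sup>2 / 2) * 1
      - 2 * r1 * eps * (- sin (m * x) * (m * 1)) / m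
      - eps\<^sup>2 * (cos (2 * m * x) * (2 * m * 1)) / (4 * m))) (at x)"
    unfolding QP_def using m_pos by (intro derivative_eq_intros) auto
  moreover have "- c * ((r1\<^sup>2 - r0\<^sup>2 + eps\<^sup>2 / 2) * 1
      - 2 * r1 * eps * (- sin (m * x) * (m * 1)) / m
      - eps\<^sup>2 * (cos (2 * m * x) * (2 * m * 1)) / (4 * m)) = qP x"
  proof -
    have c2: "cos (2 * m * x) = 1 - 2 * (sin (m * x))\<^sup>2"
      using cos_double_sin[of "m * x"] by (simp add: mult.assoc)
    show ?thesis unfolding qP_def c2 using m_pos
      by (simp add: field_simps power2_eq_square)
  qed
  ultimately show ?thesis by simp
qed

lemma P_dens_ind: "P_dens r0 v w x = indicator {0<..<T} x * qP x"
proof (cases "x \<in> {0<..<T}")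
  case True
  then show ?thesis unfolding P_dens_eq qP_def
    using thetad_inner[OF True] rho_inner[of x] by auto
next
  case False
  then show ?thesis unfolding P_dens_eq using thetad_far[OF False] by simp
qed

lemma P_integrable: "integrable lborel (P_dens r0 v w)"
proof -
  have "integrable lborel (\<lambda>x. indicator {0<..<T} x * qP x)"
    by (rule lint_ftc(1)[OF _ _ QP_deriv]) (use T_pos in \<open>auto simp: qP_def intro!: continuous_intros\<close>)
  then show ?thesis by (simp add: P_dens_ind[abs_def])
qed

lemma P_value: "P_mom r0 v w = - c * T * (r1\<^sup>2 - r0\<^sup>2 + eps\<^sup>2 / 2)"
proof -
  have "(LINT x|lborel. indicator {0<..<T} x * qP x) = QP T - QP 0"
    by (rule lint_ftc(2)[OF _ _ QP_deriv]) (use T_pos in \<open>auto simp: qP_def intro!: continuous_intros\<close>)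
  also have "\<dots> = - c * T * (r1\<^sup>2 - r0\<^sup>2 + eps\<^sup>2 / 2)"
    unfolding QP_def using sin2mT cosmT m_pos by (simp add: field_simps)
  finally show ?thesis unfolding P_mom_def by (simp add: P_dens_ind[abs_def])
qed

end

locale cons2 = cons +
  fixes F h h' :: "real \<Rightarrow> real" and \<kappa> :: real
  assumes Fcont: "continuous_on {0..} F" and hcont: "continuous_on {0..} h"
    and h'cont: "continuous_on {0..} h'"
    and hder: "\<And>y. y > 0 \<Longrightarrow> (h has_real_derivative h' y) (at y)"
    and Fr0: "F (r0\<^sup>2) = 0"
begin

definition "g x = 2 * rho x * rhod x * h' ((rho x)\<^sup>2)"
definition "cc s = 1 + 2 * \<kappa> * s\<^sup>2 * (h' (s\<^sup>2))\<^sup>2"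
definition "Fc s = F (max 0 s)"
definition "Hc s = h' (max 0 s)"

lemma Fc_cont: "continuous_on UNIV Fc"
  unfolding Fc_def by (rule continuous_on_compose2[OF Fcont]) (auto intro!: continuous_intros)

lemma Hc_cont: "continuous_on UNIV Hc"
  unfolding Hc_def by (rule continuous_on_compose2[OF h'cont]) (auto intro!: continuous_intros)

lemma Fc_meas[measurable]: "Fc \<in> borel_measurable borel"
  by (rule borel_measurable_continuous_onI[OF Fc_cont])

lemma Hc_meas[measurable]: "Hc \<in> borel_measurable borel"
  by (rule borel_measurable_continuous_onI[OF Hc_cont])

lemma Fc_eq: "F ((rho x)\<^sup>2) = Fc ((rho x)\<^sup>2)" unfolding Fc_def by simp
lemma Hc_eq: "h' ((rho x)\<^sup>2) = Hc ((rho x)\<^sup>2)" unfolding Hc_def by simp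

definition "hi = max r0 r1 + eps"

lemma rho_sq_range: "(rho x)\<^sup>2 \<in> {0..hi\<^sup>2}"
  using rho_gt0[of x] rho_hi[of x] unfolding hi_def
  by (auto intro!: power_mono)

lemma hi_pos: "hi > 0" unfolding hi_def using r0_pos eps_nn by auto

lemma g_H1: "H1loc_deriv (\<lambda>x. h ((cmod (v x))\<^sup>2)) g"
proof -
  have "continuous_on {0..hi\<^sup>2} h'" by (rule continuous_on_subset[OF h'cont]) auto
  then obtain Hb where Hb: "\<And>s. s \<in> {0..hi\<^sup>2} \<Longrightarrow> norm (h' s) \<le> Hb"
    using continuous_on_compact_bound[OF compact_Icc] by blast
  have e: "(\<lambda>x. h ((cmod (v x))\<^sup>2)) = (\<lambda>x. h ((rho x)\<^sup>2))" by (simp add: cmod_v)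
  show ?thesis unfolding e
  proof (rule H1loc_derivI[OF Sx_finite])
    show "continuous_on UNIV (\<lambda>x. h ((rho x)\<^sup>2))"
      by (rule continuous_on_compose2[OF hcont continuous_on_power[OF rho_cont]]) auto
    show "((\<lambda>x. h ((rho x)\<^sup>2)) has_vector_derivative g x) (at x)" if x: "x \<notin> Sx" for x
    proof -
      have d: "((\<lambda>x. (rho x)\<^sup>2) has_real_derivative 2 * rho x * rhod x) (at x)"
        by (auto intro!: derivative_eq_intros rho_deriv x)
      have "((\<lambda>x. h ((rho x)\<^sup>2)) has_real_derivative h' ((rho x)\<^sup>2) * (2 * rho x * rhod x)) (at x)"
        by (rule DERIV_chain2[OF hder d]) (use rho_gt0[of x] in simp)
      then show ?thesis unfolding g_def has_real_derivative_iff_has_vector_derivative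
        by (simp add: algebra_simps)
    qed
    show "g \<in> borel_measurable borel"
      unfolding g_def Hc_eq by measurable
    show "norm (g x) \<le> 2 * hi * (2 * \<bar>r1 - r0\<bar> + eps * m) * Hb" for x
    proof -
      have "\<bar>g x\<bar> = 2 * \<bar>rho x\<bar> * \<bar>rhod x\<bar> * \<bar>h' ((rho x)\<^sup>2)\<bar>"
        unfolding g_def by (simp add: abs_mult)
      also have "\<dots> \<le> 2 * hi * (2 * \<bar>r1 - r0\<bar> + eps * m) * Hb"
        using rho_gt0[of x] rho_hi[of x] rhod_bound[of x] Hb[OF rho_sq_range[of x]]
        unfolding hi_def by (intro mult_mono) auto
      finally show ?thesis by simp
    qed
  qed
qed

lemma E_dens_eq: "E_dens \<kappa> F v w g x = (rhod x)\<^sup>2 * cc (rho x) + (rho x * thetad x)\<^sup>2 + F ((rho x)\<^sup>2)"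
  unfolding E_dens_def cmod_w_sq cmod_v g_def cc_def
  by (simp add: algebra_simps power2_eq_square)

lemma E_dens_far: "x \<notin> {-1..T+1} \<Longrightarrow> E_dens \<kappa> F v w g x = 0"
  unfolding E_dens_eq using rho_far rhod_far[of x] thetad_far[of x] Fr0 T_pos by auto

lemma E_integrable: "integrable lborel (E_dens \<kappa> F v w g)"
proof -
  have "continuous_on {0..hi\<^sup>2} h'" by (rule continuous_on_subset[OF h'cont]) auto
  then obtain Hb where Hb: "\<And>s. s \<in> {0..hi\<^sup>2} \<Longrightarrow> norm (h' s) \<le> Hb"
    using continuous_on_compact_bound[OF compact_Icc] by blast
  have "continuous_on {0..hi\<^sup>2} F" by (rule continuous_on_subset[OF Fcont]) auto
  then obtain Fb where Fb: "\<And>s. s \<in> {0..hi\<^sup>2} \<Longrightarrow> norm (F s) \<le> Fb"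
    using continuous_on_compact_bound[OF compact_Icc] by blast
  define Brd where "Brd = 2 * \<bar>r1 - r0\<bar> + eps * m"
  show ?thesis
  proof (rule integrable_cpt[where a="-1" and b="T+1"])
    show "E_dens \<kappa> F v w g \<in> borel_measurable borel"
      unfolding E_dens_eq[abs_def] cc_def Fc_eq Hc_eq by measurable
    show "E_dens \<kappa> F v w g x = 0" if "x \<notin> {-1..T+1}" for x using E_dens_far that by simp
    show "\<bar>E_dens \<kappa> F v w g x\<bar> \<le> Brd\<^sup>2 * (1 + 2 * \<bar>\<kappa>\<bar> * hi\<^sup>2 * Hb\<^sup>2) + (hi * \<bar>c\<bar>)\<^sup>2 + Fb" for x
    proof -
      have r: "0 < rho x" "rho x \<le> hi" using rho_gt0[of x] rho_hi[of x] unfolding hi_def by auto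
      have h1: "\<bar>h' ((rho x)\<^sup>2)\<bar> \<le> Hb" using Hb[OF rho_sq_range[of x]] by simp
      have f1: "\<bar>F ((rho x)\<^sup>2)\<bar> \<le> Fb" using Fb[OF rho_sq_range[of x]] by simp
      have rd: "(rhod x)\<^sup>2 \<le> Brd\<^sup>2" unfolding Brd_def using rhod_bound[of x]
        by (metis power2_abs power_mono abs_ge_zero)
      have "\<bar>cc (rho x)\<bar> \<le> 1 + 2 * \<bar>\<kappa>\<bar> * hi\<^sup>2 * Hb\<^sup>2"
      proof -
        have "\<bar>cc (rho x)\<bar> \<le> 1 + \<bar>2 * \<kappa> * (rho x)\<^sup>2 * (h' ((rho x)\<^sup>2))\<^sup>2\<bar>"
          unfolding cc_def by linarith
        also have "\<bar>2 * \<kappa> * (rho x)\<^sup>2 * (h' ((rho x)\<^sup>2))\<^sup>2\<bar> = 2 * \<bar>\<kappa>\<bar> * (rho x)\<^sup>2 * (h' ((rho x)\<^sup>2))\<^sup>2"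
          by (simp add: abs_mult)
        also have "\<dots> \<le> 2 * \<bar>\<kappa>\<bar> * hi\<^sup>2 * Hb\<^sup>2"
        proof -
          have h2: "(h' ((rho x)\<^sup>2))\<^sup>2 \<le> Hb\<^sup>2" using h1 by (metis power2_abs power_mono abs_ge_zero)
          have r2: "(rho x)\<^sup>2 \<le> hi\<^sup>2" using r by (intro power_mono) auto
          show ?thesis using h2 r2 by (intro mult_mono) auto
        qed
        finally show ?thesis by simp
      qed
      then have a: "\<bar>(rhod x)\<^sup>2 * cc (rho x)\<bar> \<le> Brd\<^sup>2 * (1 + 2 * \<bar>\<kappa>\<bar> * hi\<^sup>2 * Hb\<^sup>2)"
        using rd by (simp add: abs_mult mult_mono)
      have b: "(rho x * thetad x)\<^sup>2 \<le> (hi * \<bar>c\<bar>)\<^sup>2"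
      proof -
        have "\<bar>rho x * thetad x\<bar> \<le> hi * \<bar>c\<bar>"
          unfolding abs_mult using r thetad_bound[of x] by (intro mult_mono) auto
        then show ?thesis by (metis power2_abs power_mono abs_ge_zero)
      qed
      have nn: "0 \<le> (rho x * thetad x)\<^sup>2" by simp
      show ?thesis unfolding E_dens_eq abs_le_iff using a[unfolded abs_le_iff] f1[unfolded abs_le_iff] b nn
        by linarith
    qed
  qed
qed

lemma v_meas[measurable]: "v \<in> borel_measurable borel"
  by (rule borel_measurable_continuous_onI[OF v_cont])

declare w_meas[measurable]

lemma in_X_v: "in_X r0 v w"
  unfolding in_X_def
proof (intro conjI)
  show "H1loc_deriv v w" by (rule v_H1)
  define Bw where "Bw = (2 * \<bar>r1 - r0\<bar> + eps * m) + (max r0 r1 + eps) * \<bar>c\<bar>"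
  show "integrable lborel (\<lambda>x. (cmod (w x))\<^sup>2)"
  proof (rule integrable_cpt[where a="-1" and b="T+1" and B="Bw\<^sup>2"])
    show "(\<lambda>x. (cmod (w x))\<^sup>2) \<in> borel_measurable borel" by measurable
    show "\<bar>(cmod (w x))\<^sup>2\<bar> \<le> Bw\<^sup>2" for x
      using w_bound[of x] unfolding Bw_def by (simp add: power_mono)
    show "x \<notin> {-1..T+1} \<Longrightarrow> (cmod (w x))\<^sup>2 = 0" for x
      unfolding cmod_w_sq using rhod_far[of x] thetad_far[of x] T_pos by auto
  qed
  show "(\<lambda>x. (cmod (v x))\<^sup>2 - r0\<^sup>2) \<in> borel_measurable lborel" by measurable
  show "integrable lborel (\<lambda>x. ((cmod (v x))\<^sup>2 - r0\<^sup>2)\<^sup>2)"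
  proof (rule integrable_cpt[where a="-1" and b="T+1" and B="(hi\<^sup>2 + r0\<^sup>2)\<^sup>2"])
    show "(\<lambda>x. ((cmod (v x))\<^sup>2 - r0\<^sup>2)\<^sup>2) \<in> borel_measurable borel" by measurable
    show "\<bar>((cmod (v x))\<^sup>2 - r0\<^sup>2)\<^sup>2\<bar> \<le> (hi\<^sup>2 + r0\<^sup>2)\<^sup>2" for x
    proof -
      have "0 \<le> (rho x)\<^sup>2" "(rho x)\<^sup>2 \<le> hi\<^sup>2" using rho_sq_range[of x] by auto
      then have "\<bar>(rho x)\<^sup>2 - r0\<^sup>2\<bar> \<le> hi\<^sup>2 + r0\<^sup>2" using zero_le_power2[of r0] unfolding abs_le_iff by linarith
      then show ?thesis unfolding cmod_v by (metis abs_ge_zero power2_abs power_mono abs_power2)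
    qed
    show "x \<notin> {-1..T+1} \<Longrightarrow> ((cmod (v x))\<^sup>2 - r0\<^sup>2)\<^sup>2 = 0" for x
      unfolding cmod_v using rho_far[of x] by simp
  qed
qed

lemma inf_v: "\<exists>\<delta>>0. \<forall>x. \<delta> \<le> cmod (v x)"
  using rho_pos unfolding cmod_v by blast

definition "qE M \<delta> x = M - \<delta> * eps\<^sup>2 * m\<^sup>2 * (cos (m * x))\<^sup>2"
definition "QE M \<delta> x = M * x - \<delta> * eps\<^sup>2 * m\<^sup>2 * (x / 2 + sin (2 * m * x) / (4 * m))"

lemma QE_deriv: "(QE M \<delta> has_real_derivative qE M \<delta> x) (at x)"
proof -
  have c2: "cos (2 * m * x) = 2 * (cos (m * x))\<^sup>2 - 1"
    using cos_double_cos[of "m * x"] by (simp add: mult.assoc)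
  have c2': "cos (m * (x * 2)) = 2 * (cos (m * x))\<^sup>2 - 1"
    using c2 by (simp add: mult_ac)
  show ?thesis unfolding QE_def using m_pos
    by (auto intro!: derivative_eq_intros simp: qE_def c2 c2' field_simps power2_eq_square)
qed

lemma E_bound:
  assumes K: "\<And>s. min r0 r1 \<le> s \<Longrightarrow> s \<le> max r0 r1 \<Longrightarrow> (r1 - r0)\<^sup>2 * \<bar>cc s\<bar> + \<bar>F (s\<^sup>2)\<bar> \<le> K"
    and DM: "\<And>s. r1 - eps \<le> s \<Longrightarrow> s \<le> r1 + eps \<Longrightarrow> cc s \<le> - \<delta> \<and> s\<^sup>2 * c\<^sup>2 + F (s\<^sup>2) \<le> M"
  shows "E_kappa \<kappa> F v w g \<le> 2 * K + T * M - \<delta> * eps\<^sup>2 * m\<^sup>2 * T / 2"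
proof -
  define B where "B x = K * indicator {-1..0} x + K * indicator {T..T+1} x + indicator {0<..<T} x * qE M \<delta> x" for x
  have i1: "integrable lborel (\<lambda>x::real. K * indicator {-1..0} x :: real)"
    by (rule integrable_cpt[of _ "\<bar>K\<bar>" "-1" 0]) (auto simp: indicator_def)
  have i2: "integrable lborel (\<lambda>x::real. K * indicator {T..T+1} x :: real)"
    by (rule integrable_cpt[of _ "\<bar>K\<bar>" T "T+1"]) (auto simp: indicator_def)
  have i3: "integrable lborel (\<lambda>x. indicator {0<..<T} x * qE M \<delta> x)"
    by (rule lint_ftc(1)[OF _ _ QE_deriv]) (use T_pos in \<open>auto simp: qE_def[abs_def] intro!: continuous_intros\<close>)
  have v3: "(LINT x|lborel. indicator {0<..<T} x * qE M \<delta> x) = QE M \<delta> T - QE M \<delta> 0"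
    by (rule lint_ftc(2)[OF _ _ QE_deriv]) (use T_pos in \<open>auto simp: qE_def[abs_def] intro!: continuous_intros\<close>)
  have v1: "(LINT (x::real)|lborel. K * indicator {-1..0} x :: real) = K"
    by (simp add: measure_lborel_Icc)
  have v2: "(LINT (x::real)|lborel. K * indicator {T..T+1} x :: real) = K"
    by (simp add: measure_lborel_Icc)
  have intB: "integrable lborel B" unfolding B_def using i1 i2 i3 by (intro Bochner_Integration.integrable_add)
  have valB: "(LINT x|lborel. B x) = 2 * K + T * M - \<delta> * eps\<^sup>2 * m\<^sup>2 * T / 2"
  proof -
    have "(LINT x|lborel. B x) = (LINT (x::real)|lborel. K * indicator {-1..0} x) + (LINT (x::real)|lborel. K * indicator {T..T+1} x)
        + (LINT x|lborel. indicator {0<..<T} x * qE M \<delta> x)"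
      unfolding B_def using i1 i2 i3 by (simp add: Bochner_Integration.integral_add Bochner_Integration.integrable_add del: integral_mult_right_zero)
    also have "\<dots> = 2 * K + (QE M \<delta> T - QE M \<delta> 0)" unfolding v1 v2 v3 by simp
    also have "QE M \<delta> T - QE M \<delta> 0 = T * M - \<delta> * eps\<^sup>2 * m\<^sup>2 * T / 2"
      unfolding QE_def using sin2mT m_pos by (simp add: field_simps)
    finally show ?thesis by simp
  qed
  have pt: "E_dens \<kappa> F v w g x \<le> B x" for x
  proof -
    consider (inner) "x \<in> {0<..<T}" | (r1) "x \<in> {-1..0}" | (r2) "x \<in> {T..T+1}" | (far) "x \<notin> {-1..T+1}"
      by (auto simp: not_less) linarith
    then show ?thesis
    proof cases
      case inner
      have rx: "rho x = r1 + eps * sin (m * x)" using rho_inner inner by auto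
      have "r1 - eps \<le> rho x" "rho x \<le> r1 + eps" unfolding rx
        using eps_nn mult_left_mono[OF sin_le_one eps_nn, of "m*x"]
          mult_left_mono[OF sin_ge_minus_one eps_nn, of "m*x"] by auto
      then have d: "cc (rho x) \<le> - \<delta>" and mm: "(rho x)\<^sup>2 * c\<^sup>2 + F ((rho x)\<^sup>2) \<le> M"
        using DM by auto
      have "(rhod x)\<^sup>2 * cc (rho x) \<le> (rhod x)\<^sup>2 * (- \<delta>)"
        using d by (intro mult_left_mono) auto
      moreover have "(rhod x)\<^sup>2 = eps\<^sup>2 * m\<^sup>2 * (cos (m * x))\<^sup>2"
        using rhod_inner[OF inner] by (simp add: power_mult_distrib)
      moreover have "B x = qE M \<delta> x" unfolding B_def using inner T_pos by (auto simp: indicator_def)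
      ultimately show ?thesis unfolding E_dens_eq thetad_inner[OF inner] qE_def
        using mm by (simp add: power_mult_distrib algebra_simps)
    next
      case r1
      then have ni: "x \<notin> {0<..<T}" using T_pos by auto
      have inds: "indicator {-1..0} x = (1::real)" "indicator {T..T+1} x = (0::real)" "indicator {0<..<T} x = (0::real)"
        using r1 T_pos ni by (auto simp: indicator_def)
      have "B x = K" unfolding B_def inds by simp
      moreover have rb: "min r0 r1 \<le> rho x" "rho x \<le> max r0 r1" using rho_between[OF ni] by auto
      moreover have "(rhod x)\<^sup>2 * cc (rho x) \<le> (r1 - r0)\<^sup>2 * \<bar>cc (rho x)\<bar>"
      proof -
        have "(rhod x)\<^sup>2 * cc (rho x) \<le> (rhod x)\<^sup>2 * \<bar>cc (rho x)\<bar>"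
          by (intro mult_left_mono) auto
        also have "\<dots> \<le> (r1 - r0)\<^sup>2 * \<bar>cc (rho x)\<bar>"
          by (intro mult_right_mono rhod_outer_sq[OF ni]) auto
        finally show ?thesis .
      qed
      moreover have "(r1 - r0)\<^sup>2 * \<bar>cc (rho x)\<bar> + \<bar>F ((rho x)\<^sup>2)\<bar> \<le> K"
        using K rb by blast
      moreover have "F ((rho x)\<^sup>2) \<le> \<bar>F ((rho x)\<^sup>2)\<bar>" by (rule abs_ge_self)
      ultimately show ?thesis unfolding E_dens_eq thetad_far[OF ni] by simp
    next
      case r2
      then have ni: "x \<notin> {0<..<T}" using T_pos by auto
      have inds: "indicator {-1..0} x = (0::real)" "indicator {T..T+1} x = (1::real)" "indicator {0<..<T} x = (0::real)"
        using r2 T_pos ni by (auto simp: indicator_def)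
      have "B x = K" unfolding B_def inds by simp
      moreover have rb: "min r0 r1 \<le> rho x" "rho x \<le> max r0 r1" using rho_between[OF ni] by auto
      moreover have "(rhod x)\<^sup>2 * cc (rho x) \<le> (r1 - r0)\<^sup>2 * \<bar>cc (rho x)\<bar>"
      proof -
        have "(rhod x)\<^sup>2 * cc (rho x) \<le> (rhod x)\<^sup>2 * \<bar>cc (rho x)\<bar>"
          by (intro mult_left_mono) auto
        also have "\<dots> \<le> (r1 - r0)\<^sup>2 * \<bar>cc (rho x)\<bar>"
          by (intro mult_right_mono rhod_outer_sq[OF ni]) auto
        finally show ?thesis .
      qed
      moreover have "(r1 - r0)\<^sup>2 * \<bar>cc (rho x)\<bar> + \<bar>F ((rho x)\<^sup>2)\<bar> \<le> K"
        using K rb by blast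
      moreover have "F ((rho x)\<^sup>2) \<le> \<bar>F ((rho x)\<^sup>2)\<bar>" by (rule abs_ge_self)
      ultimately show ?thesis unfolding E_dens_eq thetad_far[OF ni] by simp
    next
      case far
      then have "x < -1 \<or> x > T + 1" by auto
      then have "B x = 0" unfolding B_def using T_pos by (auto simp: indicator_def)
      then show ?thesis using E_dens_far[OF far] by simp
    qed
  qed
  have "E_kappa \<kappa> F v w g \<le> (LINT x|lborel. B x)"
    unfolding E_kappa_def by (rule integral_mono[OF E_integrable intB pt])
  then show ?thesis using valB by simp
qed

end

lemma construct:
  fixes r0 r1 eps T m p \<kappa> K M \<delta> :: real and F h h' :: "real \<Rightarrow> real"
  assumes r0: "r0 > 0" and r1: "r1 > 0" and eps: "0 \<le> eps" "eps < r0" "eps < r1"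
    and T: "T > 0" and m: "m > 0" and sinmT: "sin (m * T) = 0" and cosmT: "cos (m * T) = 1"
    and Fcont: "continuous_on {0..} F" and hcont: "continuous_on {0..} h"
    and h'cont: "continuous_on {0..} h'"
    and hder: "\<And>y. y > 0 \<Longrightarrow> (h has_real_derivative h' y) (at y)"
    and Fr0: "F (r0\<^sup>2) = 0"
    and Dnz: "r1\<^sup>2 - r0\<^sup>2 + eps\<^sup>2 / 2 \<noteq> 0"
    and K: "\<And>s. min r0 r1 \<le> s \<Longrightarrow> s \<le> max r0 r1 \<Longrightarrow>
       (r1 - r0)\<^sup>2 * \<bar>1 + 2 * \<kappa> * s\<^sup>2 * (h' (s\<^sup>2))\<^sup>2\<bar> + \<bar>F (s\<^sup>2)\<bar> \<le> K"
    and DM: "\<And>s. r1 - eps \<le> s \<Longrightarrow> s \<le> r1 + eps \<Longrightarrow>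
       1 + 2 * \<kappa> * s\<^sup>2 * (h' (s\<^sup>2))\<^sup>2 \<le> - \<delta> \<and>
       s\<^sup>2 * (- p / (T * (r1\<^sup>2 - r0\<^sup>2 + eps\<^sup>2 / 2)))\<^sup>2 + F (s\<^sup>2) \<le> M"
  shows "\<exists>v w g. in_X r0 v w \<and> H1loc_deriv (\<lambda>x. h ((cmod (v x))\<^sup>2)) g
    \<and> (\<exists>\<delta>>0. \<forall>x. \<delta> \<le> cmod (v x)) \<and> integrable lborel (P_dens r0 v w)
    \<and> P_mom r0 v w = p \<and> integrable lborel (E_dens \<kappa> F v w g)
    \<and> E_kappa \<kappa> F v w g \<le> 2 * K + T * M - \<delta> * eps\<^sup>2 * m\<^sup>2 * T / 2"
proof -
  define c where "c = - p / (T * (r1\<^sup>2 - r0\<^sup>2 + eps\<^sup>2 / 2))"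
  interpret C: cons2 r0 r1 eps T m c F h h' \<kappa>
    by unfold_locales (use assms in auto)
  define D where "D = r1\<^sup>2 - r0\<^sup>2 + eps\<^sup>2 / 2"
  have nz: "T * D \<noteq> 0" using T Dnz unfolding D_def by simp
  have "- c * T * (r1\<^sup>2 - r0\<^sup>2 + eps\<^sup>2 / 2) = p / (T * D) * (T * D)"
    unfolding c_def D_def[symmetric] by (simp add: algebra_simps)
  also have "\<dots> = p" using nz by simp
  finally have "- c * T * (r1\<^sup>2 - r0\<^sup>2 + eps\<^sup>2 / 2) = p" .
  then have P: "P_mom r0 C.v C.w = p" using C.P_value by simp
  have E: "E_kappa \<kappa> F C.v C.w C.g \<le> 2 * K + T * M - \<delta> * eps\<^sup>2 * m\<^sup>2 * T / 2"
    by (rule C.E_bound) (use K DM in \<open>auto simp: C.cc_def c_def\<close>)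
  show ?thesis
    using C.in_X_v C.g_H1 C.inf_v C.P_integrable P C.E_integrable E by blast
qed

lemma deriv_nonneg_unique:
  fixes f :: "real \<Rightarrow> real"
  assumes x: "0 \<le> x" and a: "(f has_real_derivative a) (at x within {0..})"
    and b: "(f has_real_derivative b) (at x within {0..})"
  shows "a = b"
proof -
  have "x islimpt {0..}"
    unfolding islimpt_approachable
  proof (intro allI impI)
    fix e :: real assume "e > 0"
    then show "\<exists>x'\<in>{0..}. x' \<noteq> x \<and> dist x' x < e"
      using x by (intro bexI[of _ "x + e/2"]) (auto simp: dist_real_def)
  qed
  then have "at x within {0..} \<noteq> bot" by (simp add: trivial_limit_within)
  then show ?thesis
    using vector_derivative_unique_within a b
    unfolding has_real_derivative_iff_has_vector_derivative by blast
qed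

lemma pick_r1:
  fixes \<phi> :: "real \<Rightarrow> real"
  assumes cont: "continuous_on {0..} \<phi>" and r: "r \<ge> 0" "\<phi> r < 0" and a: "a > 0"
  shows "\<exists>r1 \<eta>. r1 > 0 \<and> r1 \<noteq> a \<and> \<eta> > 0 \<and> \<eta> < r1 \<and> \<eta> < a \<and>
           (\<forall>s. r1 - \<eta> \<le> s \<and> s \<le> r1 + \<eta> \<longrightarrow> \<phi> s \<le> \<phi> r / 2)"
proof -
  obtain d where d: "d > 0" and dd: "\<And>x'. x' \<in> {0..} \<Longrightarrow> dist x' r < d \<Longrightarrow> dist (\<phi> x') (\<phi> r) < - \<phi> r / 2"
    using cont r unfolding continuous_on_iff by (metis atLeast_iff divide_pos_pos neg_0_less_iff_less zero_less_numeral)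
  define r1 where "r1 = (if r + d/2 = a then r + d/4 else r + d/2)"
  define \<eta> where "\<eta> = min (d/8) (a/2)"
  have r1b: "r + d/4 \<le> r1" "r1 \<le> r + d/2" "r1 \<noteq> a" unfolding r1_def using d by auto
  show ?thesis
  proof (intro exI conjI allI impI)
    show "r1 > 0" "r1 \<noteq> a" using r1b r d by auto
    show "\<eta> > 0" "\<eta> < a" unfolding \<eta>_def using d a by auto
    show "\<eta> < r1" unfolding \<eta>_def using r1b r d by auto
    fix s assume s: "r1 - \<eta> \<le> s \<and> s \<le> r1 + \<eta>"
    have "\<eta> \<le> d/8" unfolding \<eta>_def by auto
    then have "s \<in> {0..}" "dist s r < d" using s r1b r d by (auto simp: dist_real_def)
    then have "dist (\<phi> s) (\<phi> r) < - \<phi> r / 2" by (rule dd)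
    then show "\<phi> s \<le> \<phi> r / 2" by (auto simp: dist_real_def)
  qed
qed

lemma lin_at_bot:
  fixes a b :: real assumes b: "b < 0"
  shows "filterlim (\<lambda>n. a + b * real n) at_bot sequentially"
  unfolding filterlim_at_bot
proof
  fix Z :: real
  define N where "N = nat \<lceil>(a - Z) / (- b)\<rceil>"
  show "eventually (\<lambda>n. a + b * real n \<le> Z) sequentially"
    unfolding eventually_sequentially
  proof (intro exI allI impI)
    fix n assume "N \<le> n"
    then have "(a - Z) / (- b) \<le> real n" unfolding N_def by linarith
    then have "(a - Z) / (- b) * (- b) \<le> real n * (- b)"
      by (rule mult_right_mono) (use b in auto)
    then have "a - Z \<le> real n * (- b)" using b by simp
    then show "a + b * real n \<le> Z" by (simp add: algebra_simps)
  qed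
qed

lemma choice3:
  assumes "\<forall>n::nat. \<exists>a b c. P n a b c"
  shows "\<exists>A B C. \<forall>n. P n (A n) (B n) (C n)"
proof -
  have "\<forall>n. \<exists>t. P n (fst t) (fst (snd t)) (snd (snd t))"
    using assms by (metis fst_conv snd_conv)
  then obtain f where "\<forall>n. P n (fst (f n)) (fst (snd (f n))) (snd (snd (f n)))"
    by (metis choice)
  then show ?thesis
    by (intro exI[where x="\<lambda>n. fst (f n)"] exI[where x="\<lambda>n. fst (snd (f n))"]
        exI[where x="\<lambda>n. snd (snd (f n))"]) simp
qed

lemma ex_weaken:
  fixes x y p r0 \<kappa> :: real and F h :: "real \<Rightarrow> real"
  assumes "\<exists>v w g. in_X r0 v w \<and> H1loc_deriv (\<lambda>x. h ((cmod (v x))\<^sup>2)) g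
    \<and> (\<exists>\<delta>>0. \<forall>x. \<delta> \<le> cmod (v x)) \<and> integrable lborel (P_dens r0 v w)
    \<and> P_mom r0 v w = p \<and> integrable lborel (E_dens \<kappa> F v w g)
    \<and> E_kappa \<kappa> F v w g \<le> x" and xy: "x \<le> y"
  shows "\<exists>v w g. in_X r0 v w \<and> H1loc_deriv (\<lambda>x. h ((cmod (v x))\<^sup>2)) g
    \<and> (\<exists>\<delta>>0. \<forall>x. \<delta> \<le> cmod (v x)) \<and> integrable lborel (P_dens r0 v w)
    \<and> P_mom r0 v w = p \<and> integrable lborel (E_dens \<kappa> F v w g)
    \<and> E_kappa \<kappa> F v w g \<le> y"
proof -
  from assms(1) obtain v w g where H: "in_X r0 v w" "H1loc_deriv (\<lambda>x. h ((cmod (v x))\<^sup>2)) g"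
    "\<exists>\<delta>>0. \<forall>x. \<delta> \<le> cmod (v x)" "integrable lborel (P_dens r0 v w)"
    "P_mom r0 v w = p" "integrable lborel (E_dens \<kappa> F v w g)" "E_kappa \<kappa> F v w g \<le> x"
    by blast
  have "E_kappa \<kappa> F v w g \<le> y" using H(7) xy by (rule order_trans)
  then show ?thesis using H(1-6) by blast
qed

lemma from_seq:
  fixes a b p r0 \<kappa> :: real and F h :: "real \<Rightarrow> real"
  assumes H: "\<forall>n::nat. \<exists>v w g. in_X r0 v w \<and> H1loc_deriv (\<lambda>x. h ((cmod (v x))\<^sup>2)) g
    \<and> (\<exists>\<delta>>0. \<forall>x. \<delta> \<le> cmod (v x)) \<and> integrable lborel (P_dens r0 v w)
    \<and> P_mom r0 v w = p \<and> integrable lborel (E_dens \<kappa> F v w g)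
    \<and> E_kappa \<kappa> F v w g \<le> a + b * real n"
    and b: "b < 0"
  shows "\<exists>(v :: nat \<Rightarrow> real \<Rightarrow> complex) (w :: nat \<Rightarrow> real \<Rightarrow> complex) (g :: nat \<Rightarrow> real \<Rightarrow> real).
     (\<forall>n. in_X r0 (v n) (w n)
        \<and> H1loc_deriv (\<lambda>x. h ((cmod (v n x))\<^sup>2)) (g n)
        \<and> (\<exists>\<delta>>0. \<forall>x. \<delta> \<le> cmod (v n x))
        \<and> integrable lborel (P_dens r0 (v n) (w n))
        \<and> P_mom r0 (v n) (w n) = p
        \<and> integrable lborel (E_dens \<kappa> F (v n) (w n) (g n)))
     \<and> filterlim (\<lambda>n. E_kappa \<kappa> F (v n) (w n) (g n)) at_bot sequentially"
proof -
  obtain V W G where VWG: "\<forall>n. in_X r0 (V n) (W n) \<and> H1loc_deriv (\<lambda>x. h ((cmod (V n x))\<^sup>2)) (G n)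
    \<and> (\<exists>\<delta>>0. \<forall>x. \<delta> \<le> cmod (V n x)) \<and> integrable lborel (P_dens r0 (V n) (W n))
    \<and> P_mom r0 (V n) (W n) = p \<and> integrable lborel (E_dens \<kappa> F (V n) (W n) (G n))
    \<and> E_kappa \<kappa> F (V n) (W n) (G n) \<le> a + b * real n"
    using choice3[OF H] by blast
  have "filterlim (\<lambda>n. E_kappa \<kappa> F (V n) (W n) (G n)) at_bot sequentially"
    by (rule filterlim_at_bot_le[OF lin_at_bot[OF b]]) (use VWG in blast)
  then show ?thesis using VWG by blast
qed

theorem propositionA1:
  fixes r0 \<kappa> :: real and F F' h h' :: "real \<Rightarrow> real"
  assumes r0: "r0 > 0"
    and F_smooth: "smooth_nonneg F" and h_smooth: "smooth_nonneg h"
    and F'_deriv: "\<And>x. 0 \<le> x \<Longrightarrow> (F has_real_derivative F' x) (at x within {0..})"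
    and h'_deriv: "\<And>x. 0 \<le> x \<Longrightarrow> (h has_real_derivative h' x) (at x within {0..})"
    and F_r0: "F (r0\<^sup>2) = 0" and F'_r0: "F' (r0\<^sup>2) = 0"
    and cases: "(\<exists>r\<ge>0. F (r\<^sup>2) < 0) \<or> (\<exists>r\<ge>0. 1 + 2 * \<kappa> * r\<^sup>2 * (h' (r\<^sup>2))\<^sup>2 < 0)"
  shows "\<forall>p::real. \<exists>(v :: nat \<Rightarrow> real \<Rightarrow> complex) (w :: nat \<Rightarrow> real \<Rightarrow> complex) (g :: nat \<Rightarrow> real \<Rightarrow> real).
     (\<forall>n. in_X r0 (v n) (w n)
        \<and> H1loc_deriv (\<lambda>x. h ((cmod (v n x))\<^sup>2)) (g n)
        \<and> (\<exists>\<delta>>0. \<forall>x. \<delta> \<le> cmod (v n x))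
        \<and> integrable lborel (P_dens r0 (v n) (w n))
        \<and> P_mom r0 (v n) (w n) = p
        \<and> integrable lborel (E_dens \<kappa> F (v n) (w n) (g n)))
     \<and> filterlim (\<lambda>n. E_kappa \<kappa> F (v n) (w n) (g n)) at_bot sequentially"
proof
  fix p :: real
  have Fcont: "continuous_on {0..} F"
    unfolding continuous_on_eq_continuous_within using F'_deriv DERIV_continuous by blast
  have hcont: "continuous_on {0..} h"
    unfolding continuous_on_eq_continuous_within using h'_deriv DERIV_continuous by blast
  obtain D where D0: "D 0 = h"
    and DD: "\<And>k x. 0 \<le> x \<Longrightarrow> (D k has_real_derivative D (Suc k) x) (at x within {0..})"
    using h_smooth unfolding smooth_nonneg_def by blast
  have h'eq: "h' x = D 1 x" if x: "0 \<le> x" for x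
  proof -
    have "(h has_real_derivative D (Suc 0) x) (at x within {0..})" using DD[OF x, of 0] D0 by simp
    then show ?thesis using deriv_nonneg_unique[OF x h'_deriv[OF x]] by simp
  qed
  have "continuous_on {0..} (D 1)"
    unfolding continuous_on_eq_continuous_within using DD DERIV_continuous by blast
  then have h'cont: "continuous_on {0..} h'"
    by (rule continuous_on_eq) (use h'eq in auto)
  have hder: "(h has_real_derivative h' y) (at y)" if y: "y > 0" for y
  proof -
    have "at y within {0..} = at y"
      by (rule at_within_open_subset[of y "{0<..}"]) (use y in auto)
    then show ?thesis using h'_deriv[of y] y by simp
  qed
  have Fs_cont: "continuous_on UNIV (\<lambda>s. F (s\<^sup>2))"
    by (rule continuous_on_compose2[OF Fcont continuous_on_power[OF continuous_on_id]]) auto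
  have Hs_cont: "continuous_on UNIV (\<lambda>s. h' (s\<^sup>2))"
    by (rule continuous_on_compose2[OF h'cont continuous_on_power[OF continuous_on_id]]) auto
  define cc where "cc s = 1 + 2 * \<kappa> * s\<^sup>2 * (h' (s\<^sup>2))\<^sup>2" for s
  have cc_cont: "continuous_on UNIV cc"
    unfolding cc_def[abs_def]
    by (intro continuous_on_add continuous_on_mult continuous_on_const continuous_on_power
        continuous_on_id Hs_cont)
  have Kex: "\<exists>K. \<forall>s. min r0 r1 \<le> s \<longrightarrow> s \<le> max r0 r1 \<longrightarrow>
      (r1 - r0)\<^sup>2 * \<bar>cc s\<bar> + \<bar>F (s\<^sup>2)\<bar> \<le> K" for r1
  proof -
    have "continuous_on {min r0 r1..max r0 r1} (\<lambda>s. (r1 - r0)\<^sup>2 * \<bar>cc s\<bar> + \<bar>F (s\<^sup>2)\<bar>)"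
      by (intro continuous_on_add continuous_on_mult continuous_on_const continuous_on_rabs
          continuous_on_subset[OF cc_cont] continuous_on_subset[OF Fs_cont]) auto
    then obtain K where "\<And>s. s \<in> {min r0 r1..max r0 r1} \<Longrightarrow>
        norm ((r1 - r0)\<^sup>2 * \<bar>cc s\<bar> + \<bar>F (s\<^sup>2)\<bar>) \<le> K"
      using continuous_on_compact_bound[OF compact_Icc] by blast
    then show ?thesis by (intro exI[of _ K]) auto
  qed
  from cases show "\<exists>(v :: nat \<Rightarrow> real \<Rightarrow> complex) (w :: nat \<Rightarrow> real \<Rightarrow> complex) (g :: nat \<Rightarrow> real \<Rightarrow> real).
     (\<forall>n. in_X r0 (v n) (w n)
        \<and> H1loc_deriv (\<lambda>x. h ((cmod (v n x))\<^sup>2)) (g n)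
        \<and> (\<exists>\<delta>>0. \<forall>x. \<delta> \<le> cmod (v n x))
        \<and> integrable lborel (P_dens r0 (v n) (w n))
        \<and> P_mom r0 (v n) (w n) = p
        \<and> integrable lborel (E_dens \<kappa> F (v n) (w n) (g n)))
     \<and> filterlim (\<lambda>n. E_kappa \<kappa> F (v n) (w n) (g n)) at_bot sequentially"
  proof
    assume "\<exists>r\<ge>0. F (r\<^sup>2) < 0"
    then obtain r where r: "r \<ge> 0" "F (r\<^sup>2) < 0" by blast
    obtain r1 \<eta> where r1: "r1 > 0" "r1 \<noteq> r0" "\<eta> > 0"
      and r1F: "\<forall>s. r1 - \<eta> \<le> s \<and> s \<le> r1 + \<eta> \<longrightarrow> F (s\<^sup>2) \<le> F (r\<^sup>2) / 2"
      using pick_r1[OF continuous_on_subset[OF Fs_cont] r r0] by auto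
    have F1: "F (r1\<^sup>2) < 0" using r1F[rule_format, of r1] r1 r by auto
    define \<Delta> where "\<Delta> = r1\<^sup>2 - r0\<^sup>2"
    have \<Delta>: "\<Delta> \<noteq> 0" unfolding \<Delta>_def using r1 r0 power2_eq_iff_nonneg[of r1 r0] by auto
    obtain K where K: "\<forall>s. min r0 r1 \<le> s \<longrightarrow> s \<le> max r0 r1 \<longrightarrow>
      (r1 - r0)\<^sup>2 * \<bar>cc s\<bar> + \<bar>F (s\<^sup>2)\<bar> \<le> K" using Kex by blast
    define a where "a = 2 * K + r1\<^sup>2 * p\<^sup>2 / \<Delta>\<^sup>2 + 2 * pi * F (r1\<^sup>2)"
    define b where "b = 2 * pi * F (r1\<^sup>2)"
    have b: "b < 0" unfolding b_def using F1 by (simp add: mult_pos_neg)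
    show ?thesis
    proof (rule from_seq[OF _ b, of r0 h p \<kappa> F a], rule allI)
      fix n :: nat
      define T where "T = real (2 * (n + 1)) * pi"
      define c where "c = - p / (T * (r1\<^sup>2 - r0\<^sup>2 + 0\<^sup>2 / 2))"
      define M where "M = r1\<^sup>2 * c\<^sup>2 + F (r1\<^sup>2)"
      have T1: "T \<ge> 1"
      proof -
        have "(1::real) * 1 \<le> real (2 * (n + 1)) * pi"
          by (intro mult_mono) (use pi_ge_two in auto)
        then show ?thesis unfolding T_def by simp
      qed
      have X: "\<exists>v w g. in_X r0 v w \<and> H1loc_deriv (\<lambda>x. h ((cmod (v x))\<^sup>2)) g
        \<and> (\<exists>\<delta>>0. \<forall>x. \<delta> \<le> cmod (v x)) \<and> integrable lborel (P_dens r0 v w)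
        \<and> P_mom r0 v w = p \<and> integrable lborel (E_dens \<kappa> F v w g)
        \<and> E_kappa \<kappa> F v w g \<le> 2 * K + T * M - (- cc r1) * 0\<^sup>2 * 1\<^sup>2 * T / 2"
      proof (rule construct[OF r0 r1(1) _ _ _ _ _ _ _ Fcont hcont h'cont hder F_r0])
        show "sin (1 * T) = 0" unfolding T_def by (simp only: mult_1 sin_npi)
        show "cos (1 * T) = 1" unfolding T_def by (simp only: mult_1 cos_npi) simp
        show "r1\<^sup>2 - r0\<^sup>2 + 0\<^sup>2 / 2 \<noteq> 0" using \<Delta> unfolding \<Delta>_def by simp
        show "\<And>s. min r0 r1 \<le> s \<Longrightarrow> s \<le> max r0 r1 \<Longrightarrow>
          (r1 - r0)\<^sup>2 * \<bar>1 + 2 * \<kappa> * s\<^sup>2 * (h' (s\<^sup>2))\<^sup>2\<bar> + \<bar>F (s\<^sup>2)\<bar> \<le> K"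
          using K unfolding cc_def by blast
        show "\<And>s. r1 - 0 \<le> s \<Longrightarrow> s \<le> r1 + 0 \<Longrightarrow>
          1 + 2 * \<kappa> * s\<^sup>2 * (h' (s\<^sup>2))\<^sup>2 \<le> - (- cc r1) \<and>
          s\<^sup>2 * (- p / (T * (r1\<^sup>2 - r0\<^sup>2 + 0\<^sup>2 / 2)))\<^sup>2 + F (s\<^sup>2) \<le> M"
          unfolding M_def c_def cc_def by auto
      qed (use r0 r1 T1 in auto)
      have "2 * K + T * M - (- cc r1) * 0\<^sup>2 * 1\<^sup>2 * T / 2 \<le> a + b * real n"
      proof -
        have c2: "T * (r1\<^sup>2 * c\<^sup>2) = (r1\<^sup>2 * p\<^sup>2 / \<Delta>\<^sup>2) / T"
          unfolding c_def \<Delta>_def[symmetric] using T1 \<Delta>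
          by (simp add: power_divide power_mult_distrib field_simps power2_eq_square)
        have "(r1\<^sup>2 * p\<^sup>2 / \<Delta>\<^sup>2) / T \<le> r1\<^sup>2 * p\<^sup>2 / \<Delta>\<^sup>2"
          using divide_left_mono[of 1 T "r1\<^sup>2 * p\<^sup>2 / \<Delta>\<^sup>2"] T1 by simp
        moreover have "T * F (r1\<^sup>2) = 2 * pi * F (r1\<^sup>2) + b * real n"
          unfolding T_def b_def by (simp add: algebra_simps)
        ultimately show ?thesis unfolding M_def a_def using c2
          by (simp add: algebra_simps)
      qed
      with X show "\<exists>v w g. in_X r0 v w \<and> H1loc_deriv (\<lambda>x. h ((cmod (v x))\<^sup>2)) g
        \<and> (\<exists>\<delta>>0. \<forall>x. \<delta> \<le> cmod (v x)) \<and> integrable lborel (P_dens r0 v w)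
        \<and> P_mom r0 v w = p \<and> integrable lborel (E_dens \<kappa> F v w g)
        \<and> E_kappa \<kappa> F v w g \<le> a + b * real n"
        by (rule ex_weaken)
    qed
  next
    assume "\<exists>r\<ge>0. 1 + 2 * \<kappa> * r\<^sup>2 * (h' (r\<^sup>2))\<^sup>2 < 0"
    then obtain r where r: "r \<ge> 0" "cc r < 0" unfolding cc_def by blast
    obtain r1 \<eta> where r1: "r1 > 0" "r1 \<noteq> r0" "\<eta> > 0" "\<eta> < r1" "\<eta> < r0"
      and r1c: "\<forall>s. r1 - \<eta> \<le> s \<and> s \<le> r1 + \<eta> \<longrightarrow> cc s \<le> cc r / 2"
      using pick_r1[OF continuous_on_subset[OF cc_cont] r r0] by auto
    define \<Delta> where "\<Delta> = r1\<^sup>2 - r0\<^sup>2"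
    have \<Delta>: "\<Delta> \<noteq> 0" unfolding \<Delta>_def using r1 r0 power2_eq_iff_nonneg[of r1 r0] by auto
    define eps where "eps = min \<eta> (min 1 \<bar>\<Delta>\<bar>) / 2"
    have eps: "eps > 0" "eps \<le> \<eta> / 2" "eps \<le> 1/2" "eps \<le> \<bar>\<Delta>\<bar> / 2"
      unfolding eps_def using r1 \<Delta> by auto
    have D2: "r1\<^sup>2 - r0\<^sup>2 + eps\<^sup>2 / 2 \<noteq> 0"
    proof -
      have "eps\<^sup>2 \<le> (\<bar>\<Delta>\<bar> / 2) * (1/2)" unfolding power2_eq_square
        using eps by (intro mult_mono) auto
      then have "\<bar>eps\<^sup>2 / 2\<bar> < \<bar>\<Delta>\<bar>" using \<Delta> by simp
      then show ?thesis unfolding \<Delta>_def by linarith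
    qed
    define T :: real where "T = 2 * pi"
    define c where "c = - p / (T * (r1\<^sup>2 - r0\<^sup>2 + eps\<^sup>2 / 2))"
    have "continuous_on {r1 - eps..r1 + eps} (\<lambda>s. s\<^sup>2 * c\<^sup>2 + F (s\<^sup>2))"
      by (intro continuous_on_add continuous_on_mult continuous_on_const continuous_on_power
          continuous_on_id continuous_on_subset[OF Fs_cont]) auto
    then obtain M where M: "\<And>s. s \<in> {r1 - eps..r1 + eps} \<Longrightarrow> norm (s\<^sup>2 * c\<^sup>2 + F (s\<^sup>2)) \<le> M"
      using continuous_on_compact_bound[OF compact_Icc] by blast
    obtain K where K: "\<forall>s. min r0 r1 \<le> s \<longrightarrow> s \<le> max r0 r1 \<longrightarrow>
      (r1 - r0)\<^sup>2 * \<bar>cc s\<bar> + \<bar>F (s\<^sup>2)\<bar> \<le> K" using Kex by blast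
    define \<delta> where "\<delta> = - cc r / 2"
    have \<delta>: "\<delta> > 0" unfolding \<delta>_def using r by simp
    define a where "a = 2 * K + T * M - \<delta> * eps\<^sup>2 * pi"
    define b where "b = - \<delta> * eps\<^sup>2 * pi"
    have b: "b < 0" unfolding b_def using \<delta> eps by simp
    show ?thesis
    proof (rule from_seq[OF _ b, of r0 h p \<kappa> F a], rule allI)
      fix n :: nat
      define m :: real where "m = real (n + 1)"
      have X: "\<exists>v w g. in_X r0 v w \<and> H1loc_deriv (\<lambda>x. h ((cmod (v x))\<^sup>2)) g
        \<and> (\<exists>\<delta>>0. \<forall>x. \<delta> \<le> cmod (v x)) \<and> integrable lborel (P_dens r0 v w)
        \<and> P_mom r0 v w = p \<and> integrable lborel (E_dens \<kappa> F v w g)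
        \<and> E_kappa \<kappa> F v w g \<le> 2 * K + T * M - \<delta> * eps\<^sup>2 * m\<^sup>2 * T / 2"
      proof (rule construct[OF r0 r1(1) _ _ _ _ _ _ _ Fcont hcont h'cont hder F_r0 D2])
        have mT: "m * T = real (2 * (n + 1)) * pi" unfolding m_def T_def by simp
        show "sin (m * T) = 0" unfolding mT by (rule sin_npi)
        show "cos (m * T) = 1" unfolding mT cos_npi by simp
        show "\<And>s. min r0 r1 \<le> s \<Longrightarrow> s \<le> max r0 r1 \<Longrightarrow>
          (r1 - r0)\<^sup>2 * \<bar>1 + 2 * \<kappa> * s\<^sup>2 * (h' (s\<^sup>2))\<^sup>2\<bar> + \<bar>F (s\<^sup>2)\<bar> \<le> K"
          using K unfolding cc_def by blast
        show "1 + 2 * \<kappa> * s\<^sup>2 * (h' (s\<^sup>2))\<^sup>2 \<le> - \<delta> \<and>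
          s\<^sup>2 * (- p / (T * (r1\<^sup>2 - r0\<^sup>2 + eps\<^sup>2 / 2)))\<^sup>2 + F (s\<^sup>2) \<le> M"
          if s: "r1 - eps \<le> s" "s \<le> r1 + eps" for s
        proof
          have "cc s \<le> cc r / 2" using r1c s eps by auto
          then have "cc s \<le> - \<delta>" unfolding \<delta>_def by simp
          then show "1 + 2 * \<kappa> * s\<^sup>2 * (h' (s\<^sup>2))\<^sup>2 \<le> - \<delta>" unfolding cc_def .
          have "norm (s\<^sup>2 * c\<^sup>2 + F (s\<^sup>2)) \<le> M" using M s by auto
          then show "s\<^sup>2 * (- p / (T * (r1\<^sup>2 - r0\<^sup>2 + eps\<^sup>2 / 2)))\<^sup>2 + F (s\<^sup>2) \<le> M"
            unfolding c_def by simp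
        qed
      qed (use r0 r1 eps m_def T_def in auto)
      have "2 * K + T * M - \<delta> * eps\<^sup>2 * m\<^sup>2 * T / 2 \<le> a + b * real n"
      proof -
        have "m \<le> m\<^sup>2" unfolding m_def power2_eq_square by simp
        then have "\<delta> * eps\<^sup>2 * pi * m \<le> \<delta> * eps\<^sup>2 * pi * m\<^sup>2"
          using \<delta> by (intro mult_left_mono) auto
        then show ?thesis unfolding a_def b_def T_def m_def by (simp add: algebra_simps)
      qed
      with X show "\<exists>v w g. in_X r0 v w \<and> H1loc_deriv (\<lambda>x. h ((cmod (v x))\<^sup>2)) g
        \<and> (\<exists>\<delta>>0. \<forall>x. \<delta> \<le> cmod (v x)) \<and> integrable lborel (P_dens r0 v w)
        \<and> P_mom r0 v w = p \<and> integrable lborel (E_dens \<kappa> F v w g)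
        \<and> E_kappa \<kappa> F v w g \<le> a + b * real n"
        by (rule ex_weaken)
    qed
  qed
qed

end
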